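(* Let $G$ be a non-empty bipartite graph with parts $X$ and $Y$. Let $X_0=\{x\in X: d(x)=|Y|\}$, $X_1=X\setminus X_0$, $Y_0=\{y\in Y: d(y)=|X|\}$ and $Y_1=Y\setminus Y_0$. Suppose that (i) $|X|>|Y|$, and (ii) either $X_1=Y_1=\emptyset$, or $|X_0|/|Y_1|>2|X_1|/|Y_0|$. Then $G$ contains a collection of at most $\left\lceil \frac{|X|}{|Y|+1}\right\rceil$ paths which together cover all vertices of $G$.
   Context: $d(v)$ denotes the degree of $v$ in $G$. Paths may have length zero (a single vertex) and need not be vertex-disjoint. *)

theory Defs
  imports Complex_Main
begin

definition bipartite_graph :: "'a set \<Rightarrow> 'a set \<Rightarrow> ('a \<Rightarrow> 'a \<Rightarrow> bool) \<Rightarrow> bool" where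
  "bipartite_graph X Y E \<longleftrightarrow>
     finite X \<and> finite Y \<and> X \<inter> Y = {} \<and>
     (\<forall>u v. E u v \<longrightarrow> E v u) \<and>
     (\<forall>u v. E u v \<longrightarrow> (u \<in> X \<and> v \<in> Y) \<or> (u \<in> Y \<and> v \<in> X))"

definition deg :: "('a \<Rightarrow> 'a \<Rightarrow> bool) \<Rightarrow> 'a \<Rightarrow> nat" where
  "deg E v = card {u. E v u}"

definition is_path :: "'a set \<Rightarrow> ('a \<Rightarrow> 'a \<Rightarrow> bool) \<Rightarrow> 'a list \<Rightarrow> bool" where
  "is_path V E p \<longleftrightarrow> p \<noteq> [] \<and> distinct p \<and> set p \<subseteq> V \<and>
     (\<forall>i. Suc i < length p \<longrightarrow> E (p ! i) (p ! Suc i))"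

end

theory Submission
  imports Defs
begin

definition weave :: "'a list \<Rightarrow> 'a list \<Rightarrow> 'a list" where
  "weave xs ws = map (\<lambda>i. if even i then xs ! (i div 2) else ws ! (i div 2)) [0..<2 * length xs - 1]"

lemma weave_path:
  assumes symE: "\<And>u v. E u v \<Longrightarrow> E v u"
    and dx: "distinct xs" and dw: "distinct ws" and sx: "set xs \<subseteq> X" and sw: "set ws \<subseteq> Y"
    and XY: "X \<inter> Y = {}" and ne: "xs \<noteq> []" and len: "length xs \<le> length ws + 1"
    and adj: "\<And>j. Suc j < length xs \<Longrightarrow> E (xs!j) (ws!j) \<and> E (xs!Suc j) (ws!j)"
  shows "is_path (X \<union> Y) E (weave xs ws)"
    and "set (weave xs ws) = set xs \<union> set (take (length xs - 1) ws)"
proof -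
  let ?n = "2 * length xs - 1"
  have len_w: "length (weave xs ws) = ?n" by (simp add: weave_def)
  have nth_w: "\<And>i. i < ?n \<Longrightarrow> weave xs ws ! i = (if even i then xs ! (i div 2) else ws ! (i div 2))"
    by (simp add: weave_def)
  have inX: "\<And>i. i < ?n \<Longrightarrow> even i \<Longrightarrow> i div 2 < length xs" by auto
  have inW: "\<And>i. i < ?n \<Longrightarrow> odd i \<Longrightarrow> i div 2 < length ws" using len by (auto elim!: oddE)
  have dist: "distinct (weave xs ws)"
  proof (subst distinct_conv_nth, intro allI impI)
    fix i j assume ij: "i < length (weave xs ws)" "j < length (weave xs ws)" "i \<noteq> j"
    show "weave xs ws ! i \<noteq> weave xs ws ! j"
    proof (cases "even i")
      case True
      note ei = True
      show ?thesis
      proof (cases "even j")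
        case True
        have "i div 2 \<noteq> j div 2" using ei True ij(3) by (metis dvd_mult_div_cancel)
        then show ?thesis using ij ei True nth_w len_w inX dx by (simp add: nth_eq_iff_index_eq)
      next
        case False
        have "xs ! (i div 2) \<in> X" using inX[of i] ij ei len_w sx by auto
        moreover have "ws ! (j div 2) \<in> Y" using inW[of j] ij False len_w sw by auto
        ultimately show ?thesis using ij ei False nth_w len_w XY by auto
      qed
    next
      case False
      note oi = False
      show ?thesis
      proof (cases "even j")
        case True
        have "xs ! (j div 2) \<in> X" using inX[of j] ij True len_w sx by auto
        moreover have "ws ! (i div 2) \<in> Y" using inW[of i] ij oi len_w sw by auto
        ultimately show ?thesis using ij oi True nth_w len_w XY by auto
      next
        case False
        have "i div 2 \<noteq> j div 2" using oi False ij(3) by (metis odd_two_times_div_two_succ)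
        moreover have "i div 2 < length ws" "j div 2 < length ws" using inW ij oi False len_w by auto
        ultimately show ?thesis using ij oi False nth_w len_w dw by (simp add: nth_eq_iff_index_eq)
      qed
    qed
  qed
  have setw: "set (weave xs ws) = set xs \<union> set (take (length xs - 1) ws)"
  proof
    show "set (weave xs ws) \<subseteq> set xs \<union> set (take (length xs - 1) ws)"
    proof
      fix v assume "v \<in> set (weave xs ws)"
      then obtain i where i0: "i < length (weave xs ws)" "v = weave xs ws ! i" by (metis in_set_conv_nth)
      have i1: "i < ?n" using i0(1) len_w by simp
      have v: "v = (if even i then xs ! (i div 2) else ws ! (i div 2))" using i0(2) nth_w[OF i1] by simp
      show "v \<in> set xs \<union> set (take (length xs - 1) ws)"
      proof (cases "even i")
        case True
        then have "v = xs ! (i div 2)" using v by simp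
        moreover have "i div 2 < length xs" using inX[OF i1 True] .
        ultimately show ?thesis by simp
      next
        case False
        have a: "i div 2 < length xs - 1" using i1 False by (auto elim!: oddE)
        have b: "i div 2 < length ws" using inW[OF i1 False] .
        have "ws ! (i div 2) = take (length xs - 1) ws ! (i div 2)" using a b by simp
        moreover have "i div 2 < length (take (length xs - 1) ws)" using a b by simp
        ultimately have "ws ! (i div 2) \<in> set (take (length xs - 1) ws)" by (metis nth_mem)
        moreover have "v = ws ! (i div 2)" using v False by simp
        ultimately show ?thesis by simp
      qed
    qed
  next
    show "set xs \<union> set (take (length xs - 1) ws) \<subseteq> set (weave xs ws)"
    proof
      fix v assume "v \<in> set xs \<union> set (take (length xs - 1) ws)"
      then show "v \<in> set (weave xs ws)"
      proof
        assume "v \<in> set xs"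
        then obtain j where j: "j < length xs" "v = xs ! j" by (metis in_set_conv_nth)
        have j1: "2*j < ?n" using j by auto
        have "weave xs ws ! (2*j) = xs ! j" using nth_w[OF j1] by simp
        moreover have "weave xs ws ! (2*j) \<in> set (weave xs ws)" using j1 len_w by (intro nth_mem) simp
        ultimately show ?thesis using j by simp
      next
        assume "v \<in> set (take (length xs - 1) ws)"
        then obtain j where j: "j < length (take (length xs - 1) ws)" "v = take (length xs - 1) ws ! j" by (metis in_set_conv_nth)
        have j2: "j < length xs - 1" "j < length ws" using j(1) by auto
        have v: "v = ws ! j" using j by simp
        have j1: "2*j+1 < ?n" using j2 by auto
        have "weave xs ws ! (2*j+1) = ws ! j" using nth_w[OF j1] by simp
        moreover have "weave xs ws ! (2*j+1) \<in> set (weave xs ws)" using j1 len_w by (intro nth_mem) simp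
        ultimately show ?thesis using v by simp
      qed
    qed
  qed
  show "set (weave xs ws) = set xs \<union> set (take (length xs - 1) ws)" by (rule setw)
  show "is_path (X \<union> Y) E (weave xs ws)"
    unfolding is_path_def
  proof (intro conjI allI impI)
    show "weave xs ws \<noteq> []" proof -
      have "length xs > 0" using ne by simp
      then have "0 < ?n" by linarith
      then show ?thesis using len_w by (metis less_numeral_extra(3) list.size(3))
    qed
    show "distinct (weave xs ws)" by (rule dist)
    show "set (weave xs ws) \<subseteq> X \<union> Y" unfolding setw using sx sw set_take_subset[of "length xs - 1" ws] by blast
    fix i assume si: "Suc i < length (weave xs ws)"
    have i1: "i < ?n" "Suc i < ?n" using si len_w by auto
    show "E (weave xs ws ! i) (weave xs ws ! Suc i)"
    proof (cases "even i")
      case True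
      have a: "Suc (i div 2) < length xs" using i1 True by (auto elim!: evenE)
      have b: "Suc i div 2 = i div 2" using True by (auto elim!: evenE)
      have "weave xs ws ! i = xs ! (i div 2)" using nth_w[OF i1(1)] True by simp
      moreover have "weave xs ws ! Suc i = ws ! (i div 2)" using nth_w[OF i1(2)] True b by simp
      ultimately show ?thesis using adj[OF a] by simp
    next
      case False
      have b: "Suc i div 2 = Suc (i div 2)" using False by (auto elim!: oddE)
      have a: "Suc (i div 2) < length xs" using i1 False by (auto elim!: oddE)
      have "weave xs ws ! i = ws ! (i div 2)" using nth_w[OF i1(1)] False by simp
      moreover have "weave xs ws ! Suc i = xs ! Suc (i div 2)" using nth_w[OF i1(2)] False b by simp
      ultimately show ?thesis using adj[OF a] symE by metis
    qed
  qed
qed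


lemma cover:
  fixes A B :: "'a set" and c m j :: nat
  assumes "finite A" "finite B" "A \<inter> B = {}" "card B \<le> j*c" "card A + card B \<le> j*(m+1)" "c \<le> m"
  shows "\<exists>L. finite L \<and> card L \<le> j \<and>
     (\<forall>l\<in>L. l \<noteq> [] \<and> distinct l \<and> set l \<subseteq> A \<union> B \<and> length l \<le> m+1 \<and> (\<forall>i<length l. c \<le> i \<longrightarrow> l!i \<in> A)) \<and>
     (\<Union>l\<in>L. set l) = A \<union> B \<and> (m+1 \<le> card A + min (card B) c \<longrightarrow> (\<exists>l\<in>L. length l = m+1))"
  using assms
proof (induction j arbitrary: A B)
  case 0
  then have "A = {}" "B = {}" by auto
  then show ?case by (intro exI[of _ "{}"]) auto
next
  case (Suc j)
  show ?case
  proof (cases "A \<union> B = {}")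
    case True
    then show ?thesis by (intro exI[of _ "{}"]) auto
  next
    case False
    obtain la where la: "distinct la" "set la = A" using Suc.prems(1) finite_distinct_list by blast
    obtain lb where lb: "distinct lb" "set lb = B" using Suc.prems(2) finite_distinct_list by blast
    have cla: "length la = card A" using la distinct_card by fastforce
    have clb: "length lb = card B" using lb distinct_card by fastforce
    define tb where "tb = take c lb"
    define ta where "ta = take (m+1 - length tb) la"
    define l where "l = tb @ ta"
    have ltb: "length tb = min c (card B)" using clb tb_def by simp
    have lta: "length ta = min (m+1 - length tb) (card A)" using cla ta_def by simp
    have stb: "set tb \<subseteq> B" using lb tb_def set_take_subset by metis
    have sta: "set ta \<subseteq> A" using la ta_def set_take_subset by metis
    have dtb: "distinct tb" using lb tb_def by simp
    have dta: "distinct ta" using la ta_def by simp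
    have dl: "distinct l" using dtb dta stb sta Suc.prems(3) l_def by auto
    have ll: "length l = length tb + length ta" using l_def by simp
    have llm: "length l \<le> m+1" using ll ltb lta Suc.prems(6) by linarith
    have lne: "l \<noteq> []"
    proof (cases "B = {}")
      case True
      then have "A \<noteq> {}" using False by auto
      then have "card A > 0" using Suc.prems(1) by auto
      moreover have "length tb = 0" using ltb True by simp
      ultimately have "length ta > 0" using lta by simp
      then show ?thesis using ll by auto
    next
      case nB: False
      then have "card B > 0" using Suc.prems(2) by auto
      then have "c > 0" using Suc.prems(4) by (cases "c = 0") auto
      then have "length tb > 0" using ltb \<open>card B > 0\<close> by simp
      then show ?thesis using ll by auto
    qed
    have lA: "\<forall>i<length l. c \<le> i \<longrightarrow> l!i \<in> A"
    proof (intro allI impI)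
      fix i assume i: "i < length l" "c \<le> i"
      have "length tb \<le> i" using ltb i by simp
      then have "l ! i = ta ! (i - length tb)" using l_def by (simp add: nth_append)
      moreover have "i - length tb < length ta" using i ll \<open>length tb \<le> i\<close> by linarith
      ultimately show "l ! i \<in> A" using sta nth_mem by (metis subsetD)
    qed
    define A' where "A' = A - set ta"
    define B' where "B' = B - set tb"
    have cA': "card A' = card A - length ta"
      using A'_def sta Suc.prems(1) card_Diff_subset[of "set ta" A] distinct_card[OF dta]
      by (metis finite_subset)
    have cB': "card B' = card B - length tb"
      using B'_def stb Suc.prems(2) card_Diff_subset[of "set tb" B] distinct_card[OF dtb]
      by (metis finite_subset)
    have h1: "card B' \<le> j * c"
    proof (cases "c \<le> card B")
      case True
      then show ?thesis using cB' ltb Suc.prems(4) by simp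
    next
      case False
      then show ?thesis using cB' ltb by simp
    qed
    have h2: "card A' + card B' \<le> j * (m+1)"
    proof (cases "length ta = m+1 - length tb")
      case True
      have "length ta \<le> card A" "length tb \<le> card B" "length tb \<le> m" using lta ltb Suc.prems(6) by auto
      moreover have "Suc j*(m+1) = (m+1) + j*(m+1)" by simp
      ultimately show ?thesis using True cA' cB' Suc.prems(5) by linarith
    next
      case False
      then have "card A' = 0" using cA' lta by simp
      moreover have "j * c \<le> j * (m+1)" using Suc.prems(6) by (intro mult_le_mono2) simp
      ultimately show ?thesis using h1 by simp
    qed
    have fA': "finite A'" "finite B'" "A' \<inter> B' = {}" using A'_def B'_def Suc.prems(1,2,3) by auto
    obtain L' where L': "finite L'" "card L' \<le> j"
      "\<forall>l\<in>L'. l \<noteq> [] \<and> distinct l \<and> set l \<subseteq> A' \<union> B' \<and> length l \<le> m+1 \<and> (\<forall>i<length l. c \<le> i \<longrightarrow> l!i \<in> A')"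
      "(\<Union>l\<in>L'. set l) = A' \<union> B'"
      using Suc.IH[OF fA' h1 h2 Suc.prems(6)] by blast
    have un: "set l \<union> (A' \<union> B') = A \<union> B" using l_def A'_def B'_def sta stb by auto
    show ?thesis
    proof (intro exI[of _ "insert l L'"] conjI)
      show "finite (insert l L')" using L' by simp
      show "card (insert l L') \<le> Suc j" using L' card_insert_le_m1
        by (metis Suc_le_mono card.insert_remove card_Diff1_le finite.insertI le_trans not_less_eq_eq)
      show "\<forall>l\<in>insert l L'. l \<noteq> [] \<and> distinct l \<and> set l \<subseteq> A \<union> B \<and> length l \<le> m+1 \<and> (\<forall>i<length l. c \<le> i \<longrightarrow> l!i \<in> A)"
        using L'(3) lne dl un llm lA A'_def B'_def by blast
      show "(\<Union>l\<in>insert l L'. set l) = A \<union> B" using L'(4) un by simp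
      show "m + 1 \<le> card A + min (card B) c \<longrightarrow> (\<exists>l\<in>insert l L'. length l = m + 1)"
      proof
        assume "m + 1 \<le> card A + min (card B) c"
        then have "length l = m+1" using ll lta ltb Suc.prems(6) by auto
        then show "\<exists>l\<in>insert l L'. length l = m + 1" by blast
      qed
    qed
  qed
qed


theorem lemma2p4:
  fixes X Y :: "'a set" and E :: "'a \<Rightarrow> 'a \<Rightarrow> bool"
  assumes G: "bipartite_graph X Y E"
    and nonempty: "X \<union> Y \<noteq> {}"
    and i: "card X > card Y"
    and ii: "let X0 = {x \<in> X. deg E x = card Y}; X1 = X - X0;
                 Y0 = {y \<in> Y. deg E y = card X}; Y1 = Y - Y0
             in (X1 = {} \<and> Y1 = {}) \<or> card X0 * card Y0 > 2 * card X1 * card Y1"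
  shows "\<exists>P. finite P \<and> card P \<le> nat \<lceil>real (card X) / real (card Y + 1)\<rceil> \<and>
             (\<forall>p \<in> P. is_path (X \<union> Y) E p) \<and> (\<Union>p \<in> P. set p) = X \<union> Y"
proof -
  have fX: "finite X" and fY: "finite Y" and XY: "X \<inter> Y = {}"
    and symE: "\<And>u v. E u v \<Longrightarrow> E v u"
    and bip: "\<And>u v. E u v \<Longrightarrow> (u \<in> X \<and> v \<in> Y) \<or> (u \<in> Y \<and> v \<in> X)"
    using G unfolding bipartite_graph_def by blast+
  define X0 where "X0 = {x \<in> X. deg E x = card Y}"
  define X1 where "X1 = X - X0"
  define Y0 where "Y0 = {y \<in> Y. deg E y = card X}"
  define Y1 where "Y1 = Y - Y0"
  have ii': "(X1 = {} \<and> Y1 = {}) \<or> card X0 * card Y0 > 2 * card X1 * card Y1"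
    using ii by (simp add: Let_def X0_def X1_def Y0_def Y1_def)
  define a where "a = card X0"
  define b where "b = card X1"
  define c where "c = card Y0"
  define d where "d = card Y1"
  define n where "n = card X"
  define m where "m = card Y"
  define k where "k = nat \<lceil>real (card X) / real (card Y + 1)\<rceil>"
  have nbX: "\<And>x. x \<in> X \<Longrightarrow> {u. E x u} \<subseteq> Y" using bip XY by blast
  have nbY: "\<And>y. y \<in> Y \<Longrightarrow> {u. E y u} \<subseteq> X" using bip XY by blast
  have adjX0: "\<And>x y. x \<in> X0 \<Longrightarrow> y \<in> Y \<Longrightarrow> E x y"
  proof -
    fix x y assume x: "x \<in> X0" and y: "y \<in> Y"
    have "{u. E x u} = Y" using nbX[of x] x fY card_subset_eq unfolding X0_def deg_def by blast
    then show "E x y" using y by blast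
  qed
  have adjY0: "\<And>x y. y \<in> Y0 \<Longrightarrow> x \<in> X \<Longrightarrow> E x y"
  proof -
    fix x y assume y: "y \<in> Y0" and x: "x \<in> X"
    have "{u. E y u} = X" using nbY[of y] y fX card_subset_eq unfolding Y0_def deg_def by blast
    then show "E x y" using x symE by blast
  qed
  have X0X: "X0 \<subseteq> X" and Y0Y: "Y0 \<subseteq> Y" unfolding X0_def Y0_def by auto
  have nab: "n = a + b" unfolding n_def a_def b_def X1_def
    using X0X fX by (metis card_Diff_subset card_mono add_diff_inverse_nat finite_subset not_less)
  have mcd: "m = c + d" unfolding m_def c_def d_def Y1_def
    using Y0Y fY by (metis card_Diff_subset card_mono add_diff_inverse_nat finite_subset not_less)
  have nm: "m + 1 \<le> n" using i unfolding n_def m_def by simp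
  have nk: "n \<le> k * (m+1)"
  proof -
    have "real n / real (m + 1) \<le> real_of_int \<lceil>real n / real (m + 1)\<rceil>" by (rule le_of_int_ceiling)
    also have "\<dots> = real k" unfolding k_def n_def m_def by simp
    finally have "real n \<le> real k * real (m+1)" by (simp add: divide_le_eq)
    then have "real n \<le> real (k * (m+1))" by (simp only: of_nat_mult)
    then show ?thesis by linarith
  qed
  have num: "b \<le> k * c \<and> m + 1 \<le> a + min b c"
  proof (cases "b = 0")
    case True
    then show ?thesis using nab nm by simp
  next
    case False
    then have "X1 \<noteq> {}" unfolding b_def by auto
    then have acb: "a * c > 2 * b * d" using ii' unfolding a_def b_def c_def d_def by auto
    have "d \<noteq> 0"
    proof
      assume "d = 0"
      then have "Y1 = {}" unfolding d_def Y1_def using fY by simp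
      then have Y0e: "Y0 = Y" unfolding Y1_def using Y0Y by auto
      have "X1 = {}"
      proof (rule ccontr)
        assume "X1 \<noteq> {}"
        then obtain x where x: "x \<in> X" "x \<notin> X0" unfolding X1_def by auto
        have "{u. E x u} = Y" using nbX[OF x(1)] adjY0[OF _ x(1)] Y0e by blast
        then have "x \<in> X0" unfolding X0_def deg_def using x by simp
        then show False using x by simp
      qed
      then show False using \<open>X1 \<noteq> {}\<close> by simp
    qed
    then have "b * (d + 1) \<le> 2 * b * d" by simp
    then have h: "b * (d+1) < a * c" using acb by linarith
    have "b * (m+1) = b * c + b * (d+1)" using mcd by (simp add: algebra_simps)
    also have "\<dots> < b * c + a * c" using h by simp
    also have "\<dots> = c * n" using nab by (simp add: algebra_simps)
    also have "\<dots> \<le> c * (k * (m+1))" using nk by simp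
    finally have "b * (m+1) < (c * k) * (m+1)" by (simp add: algebra_simps)
    then have bk: "b < c * k" by (metis mult_less_cancel2)
    have "m + 1 \<le> a + min b c"
    proof (cases "c \<le> b")
      case True
      have "d + 1 \<le> a"
      proof (rule ccontr)
        assume "\<not> d + 1 \<le> a"
        then have "a \<le> d" by simp
        then have "a * c \<le> d * c" by simp
        also have "\<dots> \<le> d * b" using True by simp
        also have "\<dots> \<le> 2 * b * d" by simp
        finally show False using acb by simp
      qed
      then show ?thesis using True mcd by simp
    next
      case False
      then show ?thesis using nab nm by simp
    qed
    then show ?thesis using bk by (simp add: mult.commute)
  qed
  have cm: "c \<le> m" using mcd by simp
  have fX0: "finite X0" "finite X1" "X0 \<inter> X1 = {}" using fX X0X unfolding X1_def by (auto intro: finite_subset)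
  have nab': "card X0 + card X1 \<le> k * (m+1)" using nab nk a_def b_def by simp
  obtain L where L: "finite L" "card L \<le> k"
     "\<forall>l\<in>L. l \<noteq> [] \<and> distinct l \<and> set l \<subseteq> X0 \<union> X1 \<and> length l \<le> m+1 \<and> (\<forall>i<length l. c \<le> i \<longrightarrow> l!i \<in> X0)"
     "(\<Union>l\<in>L. set l) = X0 \<union> X1"
     "m+1 \<le> card X0 + min (card X1) c \<longrightarrow> (\<exists>l\<in>L. length l = m+1)"
    proof -
    have "card X1 \<le> k * c" using num unfolding b_def by simp
    note C = cover[OF fX0 this nab' cm]
    have "m+1 \<le> card X0 + min (card X1) c" using num unfolding a_def b_def by simp
    then show ?thesis using C that by blast
    qed
  obtain full where full: "full \<in> L" "length full = m+1" using L(5) num unfolding a_def b_def by blast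
  obtain w0 where w0: "distinct w0" "set w0 = Y0" using fY Y0Y finite_distinct_list finite_subset by metis
  obtain w1 where w1: "distinct w1" "set w1 = Y1" using fY Y1_def finite_distinct_list by (metis finite_Diff)
  define ws where "ws = w0 @ w1"
  have lw0: "length w0 = c" unfolding c_def using w0 distinct_card by fastforce
  have dws: "distinct ws" "set ws = Y" using w0 w1 Y0Y unfolding ws_def Y1_def by auto
  have lws: "length ws = m" unfolding m_def using dws distinct_card by fastforce
  have X01: "X0 \<union> X1 = X" using X0X unfolding X1_def by auto
  have wp: "is_path (X \<union> Y) E (weave l ws) \<and> set (weave l ws) = set l \<union> set (take (length l - 1) ws)"
    if l: "l \<in> L" for l
  proof -
    have l1: "l \<noteq> []" "distinct l" "set l \<subseteq> X" "length l \<le> length ws + 1"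
      and l2: "\<forall>i<length l. c \<le> i \<longrightarrow> l!i \<in> X0" using L(3) l X01 lws by auto
    have adj: "E (l!j) (ws!j) \<and> E (l!Suc j) (ws!j)" if j: "Suc j < length l" for j
    proof (cases "j < c")
      case True
      have "ws ! j = w0 ! j" unfolding ws_def using True lw0 by (simp add: nth_append)
      then have "ws ! j \<in> Y0" using True lw0 w0 by (metis nth_mem)
      moreover have "l ! j \<in> X" "l ! Suc j \<in> X" using j l1 by (auto intro!: subsetD[OF l1(3)])
      ultimately show ?thesis using adjY0 by blast
    next
      case False
      have "j < length ws" using j l1 by simp
      then have "ws ! j \<in> Y" using dws by (metis nth_mem)
      moreover have "l ! j \<in> X0" "l ! Suc j \<in> X0" using l2 j False by auto
      ultimately show ?thesis using adjX0 by blast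
    qed
    show ?thesis using weave_path[OF symE l1(2) dws(1) l1(3) _ XY l1(1) l1(4) adj] dws by auto
  qed
  have wp1: "is_path (X \<union> Y) E (weave l ws)" if "l \<in> L" for l using wp[OF that] by (rule conjunct1)
  have wp2: "set (weave l ws) = set l \<union> set (take (length l - 1) ws)" if "l \<in> L" for l
    using wp[OF that] by (rule conjunct2)
  have wp3: "set (weave l ws) \<subseteq> X \<union> Y" if "l \<in> L" for l
    using wp1[OF that] unfolding is_path_def by (elim conjE)
  show ?thesis
  proof (intro exI[of _ "(\<lambda>l. weave l ws) ` L"] conjI)
    show "finite ((\<lambda>l. weave l ws) ` L)" using L(1) by simp
    show "card ((\<lambda>l. weave l ws) ` L) \<le> nat \<lceil>real (card X) / real (card Y + 1)\<rceil>"
      using L(2) card_image_le[OF L(1), of "\<lambda>l. weave l ws"] unfolding k_def by linarith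
    show "\<forall>p\<in>(\<lambda>l. weave l ws) ` L. is_path (X \<union> Y) E p"
    proof
      fix p assume "p \<in> (\<lambda>l. weave l ws) ` L"
      then obtain l where "l \<in> L" "p = weave l ws" by (rule imageE)
      then show "is_path (X \<union> Y) E p" using wp1 by simp
    qed
    show "(\<Union>p\<in>(\<lambda>l. weave l ws) ` L. set p) = X \<union> Y"
    proof
      show "(\<Union>p\<in>(\<lambda>l. weave l ws) ` L. set p) \<subseteq> X \<union> Y"
      proof
        fix v assume "v \<in> (\<Union>p\<in>(\<lambda>l. weave l ws) ` L. set p)"
        then obtain l where "l \<in> L" "v \<in> set (weave l ws)" by auto
        then show "v \<in> X \<union> Y" using wp3 by blast
      qed
      show "X \<union> Y \<subseteq> (\<Union>p\<in>(\<lambda>l. weave l ws) ` L. set p)"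
      proof
        fix v assume v: "v \<in> X \<union> Y"
        show "v \<in> (\<Union>p\<in>(\<lambda>l. weave l ws) ` L. set p)"
        proof (cases "v \<in> X")
          case True
          then have "v \<in> (\<Union>l\<in>L. set l)" using L(4) X01 by simp
          then obtain l where l: "l \<in> L" "v \<in> set l" by blast
          then have "v \<in> set (weave l ws)" using wp2[OF l(1)] by simp
          then show ?thesis using l(1) by blast
        next
          case False
          then have "v \<in> Y" using v by simp
          then have "v \<in> set (take (length full - 1) ws)" using full(2) lws dws by simp
          then have "v \<in> set (weave full ws)" using wp2[OF full(1)] by simp
          then show ?thesis using full(1) by blast
        qed
      qed
    qed
  qed
qed

end
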